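(* Let $x^k\in\mathbb{R}^n$ and $0<\alpha\le 1/L$, and suppose the gradient balance condition $\|\omega(x^k)\|\le\|\psi(x^k)\|$ holds. Then the subspace ISTA step $x^{k+1}=x^k-\alpha\,\psi(x^k)$ satisfies $$F(x^{k+1})-F(x^* )\le\bigl(1-\tfrac12\lambda\alpha\bigr)\bigl(F(x^k)-F(x^* )\bigr).$$
   Context: $A\in\mathbb{R}^{n\times n}$ is symmetric positive definite, with smallest eigenvalue $\lambda>0$ and largest eigenvalue $L$. Further, $b\in\mathbb{R}^n$ and $\tau\ge 0$. Define $f(x)=\tfrac12 x^TAx-b^Tx$, $g(x)=Ax-b$, and $F(x)=f(x)+\tau\|x\|_1$. Let $x^*$ be the unique minimizer of $F$. Use the convention $\mathrm{sgn}(0)=0$; $\|\cdot\|$ is the Euclidean norm. For $\alpha>0$, $i=1,\dots,n$ and $g=g(x)$: - $\omega(x)_i=0$ if $x_i\ne0$; $\omega(x)_i=0$ if $x_i=0$ and $|g_i|\le\tau$; $\omega(x)_i=g_i-\tau\,\mathrm{sgn}(g_i)$ if $x_i=0$ and $|g_i|>\tau$. - $\psi(x)_i=\frac1\alpha\bigl(x_i-\max\{|x_i-\alpha g_i|-\alpha\tau,0\}\,\mathrm{sgn}(x_i-\alpha g_i)\bigr)$ if $x_i\ne0$, and $\psi(x)_i=0$ if $x_i=0$. *)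

theory Defs
  imports "HOL-Analysis.Analysis"
begin

definition eigenvalues_of :: "real^'n^'n \<Rightarrow> real set" where
  "eigenvalues_of A = {\<mu>. \<exists>v. v \<noteq> 0 \<and> A *v v = \<mu> *\<^sub>R v}"

definition sym_posdef :: "real^'n^'n \<Rightarrow> bool" where
  "sym_posdef A \<longleftrightarrow> transpose A = A \<and> (\<forall>x. x \<noteq> 0 \<longrightarrow> x \<bullet> (A *v x) > 0)"

definition fq :: "real^'n^'n \<Rightarrow> real^'n \<Rightarrow> real^'n \<Rightarrow> real" where
  "fq A b x = (1/2) * (x \<bullet> (A *v x)) - b \<bullet> x"

definition grad :: "real^'n^'n \<Rightarrow> real^'n \<Rightarrow> real^'n \<Rightarrow> real^'n" where
  "grad A b x = A *v x - b"

definition l1norm :: "real^'n \<Rightarrow> real" where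
  "l1norm x = (\<Sum>i\<in>UNIV. \<bar>x $ i\<bar>)"

definition Fobj :: "real^'n^'n \<Rightarrow> real^'n \<Rightarrow> real \<Rightarrow> real^'n \<Rightarrow> real" where
  "Fobj A b \<tau> x = fq A b x + \<tau> * l1norm x"

definition omega :: "real^'n^'n \<Rightarrow> real^'n \<Rightarrow> real \<Rightarrow> real^'n \<Rightarrow> real^'n" where
  "omega A b \<tau> x = (\<chi> i. let g = grad A b x $ i in
      if x $ i \<noteq> 0 then 0
      else if \<bar>g\<bar> \<le> \<tau> then 0
      else g - \<tau> * sgn g)"

definition psi :: "real^'n^'n \<Rightarrow> real^'n \<Rightarrow> real \<Rightarrow> real \<Rightarrow> real^'n \<Rightarrow> real^'n" where
  "psi A b \<tau> \<alpha> x = (\<chi> i. let g = grad A b x $ i in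
      if x $ i \<noteq> 0 then
        (1/\<alpha>) * (x $ i - max (\<bar>x $ i - \<alpha> * g\<bar> - \<alpha> * \<tau>) 0 * sgn (x $ i - \<alpha> * g))
      else 0)"

end

theory Submission
  imports Defs
begin

lemma sym_inner: assumes "transpose A = A"
  shows "x \<bullet> (A *v y) = y \<bullet> (A *v (x::real^'n))"
proof -
  have "x \<bullet> (A *v y) = (x v* A) \<bullet> y" by (simp add: dot_lmul_matrix)
  also have "x v* A = transpose A *v x" by simp
  also have "\<dots> = A *v x" using assms by simp
  finally show ?thesis by (simp add: inner_commute)
qed

lemma rayleigh_max:
  fixes A :: "real^'n^'n"
  assumes symA: "transpose A = A"
  shows "\<exists>\<mu>\<in>eigenvalues_of A. \<forall>x. x \<bullet> (A *v x) \<le> \<mu> * (x \<bullet> x)"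
proof -
  define q where "q x = x \<bullet> (A *v x)" for x :: "real^'n"
  have cq: "continuous_on (sphere 0 1) q"
    unfolding q_def
    by (intro continuous_intros linear_continuous_on matrix_vector_mul_linear)
  obtain i :: 'n where True by simp
  have ne: "sphere (0::real^'n) 1 \<noteq> {}"
    using norm_axis_1[of i] by (metis mem_sphere_0 empty_iff)
  obtain v where v: "v \<in> sphere 0 1" and vmax: "\<And>x. x \<in> sphere 0 1 \<Longrightarrow> q x \<le> q v"
    using continuous_attains_sup[OF compact_sphere ne cq] by blast
  define M where "M = q v"
  have vv: "v \<bullet> v = 1" using v by (simp add: dot_square_norm)
  have bnd: "q x \<le> M * (x \<bullet> x)" for x
  proof (cases "x = 0")
    case True then show ?thesis by (simp add: q_def)
  next
    case False
    define u where "u = (1 / norm x) *\<^sub>R x"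
    have "u \<in> sphere 0 1" using False by (simp add: u_def)
    then have "q u \<le> M" using vmax M_def by simp
    moreover have "q u = q x / (norm x)^2"
      by (simp add: u_def q_def matrix_vector_mult_scaleR power2_eq_square)
    moreover have "x \<bullet> x = (norm x)^2" by (simp add: dot_square_norm)
    moreover have "norm x > 0" using False by simp
    ultimately show ?thesis by (simp add: divide_le_eq mult.commute)
  qed
  define h where "h x = M * (x \<bullet> x) - q x" for x
  have hpos: "h x \<ge> 0" for x using bnd[of x] by (simp add: h_def)
  have hv: "h v = 0" using vv by (simp add: h_def M_def)
  define w where "w = M *\<^sub>R v - A *v v"
  have exp: "h (v + t *\<^sub>R w) = h v + 2 * t * (w \<bullet> w) + t^2 * h w" for t
  proof -
    have s: "w \<bullet> (A *v v) = v \<bullet> (A *v w)" by (rule sym_inner[OF symA])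
    show ?thesis
      unfolding h_def q_def w_def
      using s[unfolded w_def] inner_commute[of "A *v v" v]
      by (simp add: algebra_simps inner_add_left inner_add_right inner_diff_left inner_diff_right
           matrix_vector_right_distrib matrix_vector_mult_scaleR power2_eq_square)
  qed
  have "w = 0"
  proof (rule ccontr)
    assume "w \<noteq> 0"
    then have wp: "w \<bullet> w > 0" by simp
    define t where "t = - (w \<bullet> w) / (h w + 1)"
    have hw: "h w \<ge> 0" by (rule hpos)
    have tneg: "t < 0" using wp hw by (simp add: t_def divide_neg_pos)
    have "t * h w > - (w \<bullet> w)" using wp hw
      by (simp add: t_def field_simps) 
    then have "2 * (w \<bullet> w) + t * h w > 0" using wp by linarith
    then have "t * (2 * (w \<bullet> w) + t * h w) < 0" using tneg by (simp add: mult_neg_pos)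
    then have "h (v + t *\<^sub>R w) < 0" using exp[of t] hv by (simp add: algebra_simps power2_eq_square)
    then show False using hpos by (metis not_le)
  qed
  then have "A *v v = M *\<^sub>R v" by (simp add: w_def)
  moreover have "v \<noteq> 0" using v by auto
  ultimately have "M \<in> eigenvalues_of A" by (auto simp: eigenvalues_of_def)
  then show ?thesis using bnd unfolding q_def by blast
qed


lemma rayleigh_min:
  fixes A :: "real^'n^'n"
  assumes symA: "transpose A = A"
  shows "\<exists>\<mu>\<in>eigenvalues_of A. \<forall>x. \<mu> * (x \<bullet> x) \<le> x \<bullet> (A *v x)"
proof -
  have e: "A$i$j = A$j$i" for i j
    by (metis symA transpose_def vec_lambda_beta)
  have "transpose (-A) = -A" by (simp add: vec_eq_iff transpose_def e)
  then obtain \<mu> where mu: "\<mu> \<in> eigenvalues_of (-A)" and b: "\<forall>x. x \<bullet> ((-A) *v x) \<le> \<mu> * (x \<bullet> x)"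
    using rayleigh_max by blast
  have neg: "(-A) *v x = - (A *v x)" for x :: "real^'n"
    by (simp add: matrix_vector_mult_def vec_eq_iff sum_negf)
  from mu obtain v where "v \<noteq> 0" "(-A) *v v = \<mu> *\<^sub>R v" by (auto simp: eigenvalues_of_def)
  then have "- (A *v v) = \<mu> *\<^sub>R v" "v \<noteq> 0" using neg[of v] by auto
  then have "A *v v = (-\<mu>) *\<^sub>R v" "v \<noteq> 0" by (metis minus_minus scaleR_minus_left)+
  then have "-\<mu> \<in> eigenvalues_of A" by (auto simp: eigenvalues_of_def)
  moreover have "\<forall>x. (-\<mu>) * (x \<bullet> x) \<le> x \<bullet> (A *v x)" proof
    fix x show "(-\<mu>) * (x \<bullet> x) \<le> x \<bullet> (A *v x)" using b[rule_format, of x] neg[of x] by (simp add: inner_minus_right)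
  qed
  ultimately show ?thesis by blast
qed

lemma fq_expand:
  fixes A :: "real^'n^'n"
  assumes symA: "transpose A = A"
  shows "fq A b (x + d) = fq A b x + grad A b x \<bullet> d + (1/2) * (d \<bullet> (A *v d))"
proof -
  have s: "x \<bullet> (A *v d) = d \<bullet> (A *v x)" by (rule sym_inner[OF symA])
  show ?thesis unfolding fq_def grad_def
    using s inner_commute[of d "A *v x"]
    by (simp add: algebra_simps inner_add_left inner_add_right inner_diff_left)
qed

lemma prox_ineq:
  fixes z y t :: real
  assumes t: "t \<ge> 0"
  defines "p \<equiv> max (\<bar>z\<bar> - t) 0 * sgn z"
  shows "t * \<bar>p\<bar> + (z - p) * (y - p) \<le> t * \<bar>y\<bar>"
proof -
  have ty: "t * y \<le> t * \<bar>y\<bar>" using t by (simp add: mult_left_mono)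
  have ty2: "- (t * y) \<le> t * \<bar>y\<bar>"
    by (metis abs_ge_minus_self mult_left_mono mult_minus_right t)
  show ?thesis
  proof (cases "\<bar>z\<bar> \<le> t")
    case True
    then have p0: "p = 0" by (simp add: p_def)
    have "z * y \<le> \<bar>z\<bar> * \<bar>y\<bar>" by (metis abs_ge_self abs_mult)
    also have "\<dots> \<le> t * \<bar>y\<bar>" using True by (simp add: mult_right_mono)
    finally show ?thesis by (simp add: p0)
  next
    case False
    show ?thesis
    proof (cases "z > 0")
      case True
      then have pe: "p = z - t" using False by (simp add: p_def)
      have h1: "\<bar>p\<bar> = z - t" "z - p = t" using False True pe by simp_all
      have "t * \<bar>p\<bar> + (z - p) * (y - p) = t * (z - t) + t * (y - p)" by (simp only: h1)
      also have "\<dots> = t * y" unfolding pe by (simp add: algebra_simps)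
      finally show ?thesis using ty by simp
    next
      case f2: False
      then have pe: "p = z + t" using False t by (auto simp add: p_def sgn_if)
      have h1: "\<bar>p\<bar> = - (z + t)" "z - p = - t" using False f2 pe by simp_all
      have "t * \<bar>p\<bar> + (z - p) * (y - p) = t * (- (z + t)) + (- t) * (y - p)" by (simp only: h1)
      also have "\<dots> = - (t * y)" unfolding pe by (simp add: algebra_simps)
      finally show ?thesis using ty2 by simp
    qed
  qed
qed

lemma coord_ineq:
  fixes xi gi y \<tau> \<alpha> :: real
  assumes tau: "\<tau> \<ge> 0" and al: "\<alpha> > 0"
  defines "ps \<equiv> (if xi \<noteq> 0 then (1/\<alpha>) * (xi - max (\<bar>xi - \<alpha> * gi\<bar> - \<alpha> * \<tau>) 0 * sgn (xi - \<alpha> * gi)) else 0)"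
  defines "om \<equiv> (if xi \<noteq> 0 then 0 else if \<bar>gi\<bar> \<le> \<tau> then 0 else gi - \<tau> * sgn gi)"
  shows "gi * ((xi - \<alpha> * ps) - y) + \<tau> * \<bar>xi - \<alpha> * ps\<bar>
         \<le> \<tau> * \<bar>y\<bar> + (\<bar>ps\<bar> + \<bar>om\<bar>) * \<bar>xi - y\<bar> - \<alpha> * ps^2"
proof (cases "xi = 0")
  case True
  then have ps0: "ps = 0" by (simp add: ps_def)
  have "- gi * y \<le> \<tau> * \<bar>y\<bar> + \<bar>om\<bar> * \<bar>y\<bar>"
  proof (cases "\<bar>gi\<bar> \<le> \<tau>")
    case True
    have "- gi * y \<le> \<bar>gi\<bar> * \<bar>y\<bar>" by (metis abs_ge_self abs_minus_cancel abs_mult minus_mult_left)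
    also have "\<dots> \<le> \<tau> * \<bar>y\<bar>" using True by (simp add: mult_right_mono)
    finally have "- gi * y \<le> \<tau> * \<bar>y\<bar>" .
    moreover have "0 \<le> \<bar>om\<bar> * \<bar>y\<bar>" by simp
    ultimately show ?thesis by linarith
  next
    case False
    then have "\<bar>om\<bar> = \<bar>gi\<bar> - \<tau>" using \<open>xi = 0\<close> tau
      by (auto simp: om_def sgn_if abs_if)
    then have "\<bar>gi\<bar> * \<bar>y\<bar> = \<tau> * \<bar>y\<bar> + \<bar>om\<bar> * \<bar>y\<bar>" by (simp add: left_diff_distrib)
    moreover have "- gi * y \<le> \<bar>gi\<bar> * \<bar>y\<bar>" by (metis abs_ge_self abs_minus_cancel abs_mult minus_mult_left)
    ultimately show ?thesis by linarith
  qed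
  then show ?thesis using True ps0 by simp
next
  case False
  define z where "z = xi - \<alpha> * gi"
  define p where "p = max (\<bar>z\<bar> - \<alpha> * \<tau>) 0 * sgn z"
  have ps: "ps = (xi - p) / \<alpha>" using False by (simp add: ps_def p_def z_def)
  have om: "om = 0" using False by (simp add: om_def)
  have xp: "xi - \<alpha> * ps = p" using al by (simp add: ps)
  have pr: "\<alpha> * \<tau> * \<bar>p\<bar> + (z - p) * (y - p) \<le> \<alpha> * \<tau> * \<bar>y\<bar>"
    unfolding p_def by (rule prox_ineq) (use tau al in simp)
  have key: "\<alpha> * (gi * (p - y) + \<tau> * \<bar>p\<bar>) \<le> \<alpha> * (\<tau> * \<bar>y\<bar>) + (xi - p) * (xi - y) - (xi - p)^2"
    using pr unfolding z_def by (simp add: algebra_simps power2_eq_square)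
  have "(xi - p) * (xi - y) \<le> \<bar>xi - p\<bar> * \<bar>xi - y\<bar>" by (metis abs_ge_self abs_mult)
  moreover have "\<alpha> * (\<tau> * \<bar>y\<bar> + \<bar>ps\<bar> * \<bar>xi - y\<bar> - \<alpha> * ps^2)
      = \<alpha> * (\<tau> * \<bar>y\<bar>) + \<bar>xi - p\<bar> * \<bar>xi - y\<bar> - (xi - p)^2"
    using al by (simp add: ps abs_divide power2_eq_square field_simps)
  ultimately have "\<alpha> * (gi * (p - y) + \<tau> * \<bar>p\<bar>) \<le> \<alpha> * (\<tau> * \<bar>y\<bar> + \<bar>ps\<bar> * \<bar>xi - y\<bar> - \<alpha> * ps^2)"
    using key by linarith
  then have "gi * (p - y) + \<tau> * \<bar>p\<bar> \<le> \<tau> * \<bar>y\<bar> + \<bar>ps\<bar> * \<bar>xi - y\<bar> - \<alpha> * ps^2"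
    using al by simp
  then show ?thesis by (simp add: xp om)
qed


theorem lemma2:
  fixes A :: "real^'n^'n" and b xk xstar :: "real^'n" and \<tau> \<alpha> lam L :: real
  assumes spd: "sym_posdef A"
    and lam: "lam \<in> eigenvalues_of A" "\<forall>\<mu>\<in>eigenvalues_of A. lam \<le> \<mu>"
    and Lmax: "L \<in> eigenvalues_of A" "\<forall>\<mu>\<in>eigenvalues_of A. \<mu> \<le> L"
    and lampos: "lam > 0"
    and tau: "\<tau> \<ge> 0"
    and xstar: "\<forall>y. Fobj A b \<tau> xstar \<le> Fobj A b \<tau> y"
    and alpha: "0 < \<alpha>" "\<alpha> \<le> 1 / L"
    and balance: "norm (omega A b \<tau> xk) \<le> norm (psi A b \<tau> \<alpha> xk)"
  shows "Fobj A b \<tau> (xk - \<alpha> *\<^sub>R psi A b \<tau> \<alpha> xk) - Fobj A b \<tau> xstar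
         \<le> (1 - lam * \<alpha> / 2) * (Fobj A b \<tau> xk - Fobj A b \<tau> xstar)"
proof -
  have symA: "transpose A = A" using spd by (simp add: sym_posdef_def)
  define x where "x = xk"
  define g where "g = grad A b x"
  define ps where "ps = psi A b \<tau> \<alpha> x"
  define om where "om = omega A b \<tau> x"
  define xp where "xp = x - \<alpha> *\<^sub>R ps"
  define P where "P = ps \<bullet> ps"
  define u where "u = (\<chi> i. \<bar>ps$i\<bar> + \<bar>om$i\<bar>)"
  define F where "F = Fobj A b \<tau>"
  have Lpos: "L > 0" using lam Lmax lampos by force
  have laL: "lam \<le> L" using lam Lmax by blast
  have La: "L * \<alpha> \<le> 1" using alpha Lpos by (simp add: field_simps)
  have Pnn: "P \<ge> 0" by (simp add: P_def)
  have qup: "d \<bullet> (A *v d) \<le> L * (d \<bullet> d)" for d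
  proof -
    obtain \<mu> where "\<mu> \<in> eigenvalues_of A" "\<forall>x. x \<bullet> (A *v x) \<le> \<mu> * (x \<bullet> x)"
      using rayleigh_max[OF symA] by blast
    moreover have "\<mu> * (d \<bullet> d) \<le> L * (d \<bullet> d)"
      using calculation Lmax(2) by (simp add: mult_right_mono)
    moreover have "d \<bullet> (A *v d) \<le> \<mu> * (d \<bullet> d)" using calculation(2) by blast
    ultimately show ?thesis by linarith
  qed
  have qlo: "lam * (d \<bullet> d) \<le> d \<bullet> (A *v d)" for d
  proof -
    obtain \<mu> where "\<mu> \<in> eigenvalues_of A" "\<forall>x. \<mu> * (x \<bullet> x) \<le> x \<bullet> (A *v x)"
      using rayleigh_min[OF symA] by blast
    moreover have "lam * (d \<bullet> d) \<le> \<mu> * (d \<bullet> d)"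
      using calculation lam(2) by (simp add: mult_right_mono)
    moreover have "\<mu> * (d \<bullet> d) \<le> d \<bullet> (A *v d)" using calculation(2) by blast
    ultimately show ?thesis by linarith
  qed
  have ps_i: "ps$i = (if x$i \<noteq> 0 then (1/\<alpha>) * (x$i - max (\<bar>x$i - \<alpha> * g$i\<bar> - \<alpha> * \<tau>) 0 * sgn (x$i - \<alpha> * g$i)) else 0)" for i
    by (simp add: ps_def psi_def Let_def g_def)
  have om_i: "om$i = (if x$i \<noteq> 0 then 0 else if \<bar>g$i\<bar> \<le> \<tau> then 0 else g$i - \<tau> * sgn (g$i))" for i
    by (simp add: om_def omega_def Let_def g_def)
  have xp_i: "xp$i = x$i - \<alpha> * ps$i" for i by (simp add: xp_def)
  have coord: "g$i * (xp$i - y$i) + \<tau> * \<bar>xp$i\<bar> \<le> \<tau> * \<bar>y$i\<bar> + (\<bar>ps$i\<bar> + \<bar>om$i\<bar>) * \<bar>x$i - y$i\<bar> - \<alpha> * (ps$i)^2" for i y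
    using coord_ineq[OF tau alpha(1), where xi="x$i" and gi="g$i" and y="y$i"] by (simp only: xp_i ps_i om_i)
  have orth: "ps$i * om$i = 0" "om$i * ps$i = 0" for i by (simp_all add: ps_i om_i)
  have key: "F xp \<le> F y + norm u * norm (x - y) - \<alpha> / 2 * P - lam / 2 * (norm (x - y))^2" for y
  proof -
    define w where "w = (\<chi> i. \<bar>x$i - y$i\<bar>)"
    have s1: "(\<Sum>i\<in>UNIV. g$i * (xp$i - y$i) + \<tau> * \<bar>xp$i\<bar>)
        \<le> (\<Sum>i\<in>UNIV. \<tau> * \<bar>y$i\<bar> + (\<bar>ps$i\<bar> + \<bar>om$i\<bar>) * \<bar>x$i - y$i\<bar> - \<alpha> * (ps$i)^2)"
      by (rule sum_mono) (rule coord)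
    have e1: "(\<Sum>i\<in>UNIV. g$i * (xp$i - y$i) + \<tau> * \<bar>xp$i\<bar>) = g \<bullet> (xp - y) + \<tau> * l1norm xp"
      by (simp add: inner_vec_def l1norm_def sum.distrib sum_distrib_left)
    have e2: "(\<Sum>i\<in>UNIV. \<tau> * \<bar>y$i\<bar> + (\<bar>ps$i\<bar> + \<bar>om$i\<bar>) * \<bar>x$i - y$i\<bar> - \<alpha> * (ps$i)^2)
        = \<tau> * l1norm y + u \<bullet> w - \<alpha> * P"
      by (simp add: inner_vec_def l1norm_def sum.distrib sum_distrib_left sum_subtractf u_def w_def P_def power2_eq_square)
    have sumineq: "g \<bullet> (xp - y) + \<tau> * l1norm xp \<le> \<tau> * l1norm y + u \<bullet> w - \<alpha> * P"
      using s1 e1 e2 by simp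
    have fxp: "fq A b xp = fq A b x + g \<bullet> (xp - x) + (1/2) * ((xp - x) \<bullet> (A *v (xp - x)))"
      using fq_expand[OF symA, of b x "xp - x"] by (simp add: g_def)
    have dd: "(xp - x) \<bullet> (xp - x) = \<alpha>^2 * P" by (simp add: xp_def P_def power2_eq_square)
    have "(xp - x) \<bullet> (A *v (xp - x)) \<le> L * (\<alpha>^2 * P)" using qup[of "xp - x"] dd by simp
    also have "\<dots> \<le> \<alpha> * P"
    proof -
      have "L * \<alpha> * (\<alpha> * P) \<le> 1 * (\<alpha> * P)" using La alpha Pnn by (intro mult_right_mono) auto
      then show ?thesis by (simp add: power2_eq_square algebra_simps)
    qed
    finally have fxp2: "fq A b xp \<le> fq A b x + g \<bullet> (xp - x) + \<alpha> / 2 * P" using fxp by simp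
    have fy: "fq A b y = fq A b x + g \<bullet> (y - x) + (1/2) * ((y - x) \<bullet> (A *v (y - x)))"
      using fq_expand[OF symA, of b x "y - x"] by (simp add: g_def)
    have R: "(y - x) \<bullet> (y - x) = (norm (x - y))^2"
      by (metis dot_square_norm norm_minus_commute)
    have fy2: "fq A b y \<ge> fq A b x + g \<bullet> (y - x) + lam / 2 * (norm (x - y))^2"
      using fy qlo[of "y - x"] R by simp
    have gg: "g \<bullet> (xp - x) - g \<bullet> (y - x) = g \<bullet> (xp - y)" by (simp add: inner_diff_right)
    have cs: "u \<bullet> w \<le> norm u * norm w" by (rule norm_cauchy_schwarz)
    have "w \<bullet> w = (x - y) \<bullet> (x - y)"
      by (simp add: w_def inner_vec_def abs_mult[symmetric])
    then have nw: "norm w = norm (x - y)" by (simp add: norm_eq_sqrt_inner)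
    show ?thesis
      unfolding F_def Fobj_def using sumineq fxp2 fy2 gg cs[unfolded nw] by linarith
  qed
  have uu: "(norm u)^2 \<le> 2 * P"
  proof -
    have "u \<bullet> u = P + om \<bullet> om"
      by (simp add: u_def inner_vec_def P_def sum.distrib[symmetric] power2_eq_square algebra_simps orth
            abs_mult[symmetric])
    moreover have "om \<bullet> om \<le> ps \<bullet> ps"
      using balance by (simp add: om_def ps_def x_def dot_square_norm power_mono)
    ultimately show ?thesis by (simp add: dot_square_norm[symmetric] P_def)
  qed
  define D where "D = F x - F xstar"
  define E where "E = F xp - F xstar"
  have Dnn: "D \<ge> 0" using xstar by (simp add: D_def F_def)
  have E1: "E \<le> D - \<alpha> / 2 * P" using key[of x] by (simp add: E_def D_def)
  have E2: "E \<le> P / lam - \<alpha> / 2 * P"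
  proof -
    define s where "s = norm u"
    define r where "r = norm (x - xstar)"
    have "0 \<le> (s - lam * r)^2" by simp
    then have "2 * lam * (s * r) \<le> s^2 + lam^2 * r^2" by (simp add: power2_eq_square algebra_simps)
    also have "\<dots> \<le> 2 * P + lam^2 * r^2" using uu s_def by simp
    finally have "s * r - lam / 2 * r^2 \<le> P / lam" using lampos
      by (simp add: field_simps power2_eq_square)
    then show ?thesis using key[of xstar] by (simp add: E_def s_def r_def)
  qed
  have la1: "lam * \<alpha> \<le> 1" using laL La alpha by (meson less_imp_le mult_right_mono order_trans)
  have "E \<le> (1 - lam * \<alpha> / 2) * D"
  proof (cases "P \<ge> lam * D")
    case True
    have "\<alpha> / 2 * (lam * D) \<le> \<alpha> / 2 * P" using True alpha by (intro mult_left_mono) auto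
    then show ?thesis using E1 by (simp add: algebra_simps)
  next
    case False
    have c: "0 \<le> 1 - lam * \<alpha> / 2" using la1 by simp
    have "P / lam \<le> D" using False lampos by (simp add: divide_le_eq mult.commute)
    then have "(1 - lam * \<alpha> / 2) * (P / lam) \<le> (1 - lam * \<alpha> / 2) * D" using c by (rule mult_left_mono)
    moreover have "(1 - lam * \<alpha> / 2) * (P / lam) = P / lam - \<alpha> / 2 * P" using lampos
      by (simp add: field_simps)
    ultimately show ?thesis using E2 by linarith
  qed
  then show ?thesis by (simp add: E_def D_def F_def xp_def ps_def x_def)
qed

end
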